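(* For each singular face $F$, the inclusion $(\mathbb C^* )^{F^c}\hookrightarrow\mathbb C^d_\Delta$ induces a homeomorphism from the orbit space $(\mathbb C^* )^{F^c}/N_{\mathbb C}$ onto $\mathcal T_F$; under the isomorphism $T^d_{\mathbb C}/N_{\mathbb C}\cong\mathfrak d_{\mathbb C}/Q$ induced by $\pi_{\mathbb C}$, this is the orbit of the complex quasitorus $D_{\mathbb C}=\mathfrak d_{\mathbb C}/Q$ corresponding to $F$. The maximal piece $\mathcal T_{\max}$ is the union of the $D_{\mathbb C}$-orbits $(\mathbb C^* )^{G^c}/N_{\mathbb C}$ corresponding to the regular faces $G$; in particular it contains the orbit corresponding to the interior of $\Delta$.
   Context: Let $\mathfrak d$ be an $n$-dimensional real vector space, $\mathfrak d^*$ its dual and $\mathfrak d_{\mathbb C}=\mathfrak d\oplus i\mathfrak d$. A quasilattice in $\mathfrak d$ is the $\mathbb Z$-submodule generated by a finite set of vectors spanning $\mathfrak d$. Let $\Delta\subset\mathfrak d^*$ be an $n$-dimensional convex polytope (not necessarily rational or simple) with $d$ facets, written as $\Delta=\bigcap_{j=1}^d\{\mu\in\mathfrak d^*:\langle\mu,X_j\rangle\ge\lambda_j\}$, where $X_1,\dots,X_d\in\mathfrak d$ are chosen inward-pointing normals and $\lambda_j\in\mathbb R$; let $Q$ be a quasilattice containing $X_1,\dots,X_d$. For each face $F$ let $I_F$ be such that $F=\{\mu\in\Delta:\langle\mu,X_j\rangle=\lambda_j\iff j\in I_F\}$ (interior: $I_F=\emptyset$). A $p$-dimensional face is regular if $|I_F|=n-p$,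 singular if $|I_F|>n-p$. $(\mathbb C^* )^{F^c}=\{z\in\mathbb C^d: z_j=0\ (j\in I_F),\ z_j\neq 0\ (j\notin I_F)\}$; $\mathbb C^d_\Delta=\bigcup_F\{z: z_j\ne0\ \forall j\notin I_F\}$ (all faces). $\pi:\mathbb R^d\to\mathfrak d$, $\pi_{\mathbb C}:\mathbb C^d\to\mathfrak d_{\mathbb C}$, $e_j\mapsto X_j$; $\mathfrak n=\ker\pi$. $T^d_{\mathbb C}=\mathbb C^d/\mathbb Z^d$ (projection $\exp$) acts on $\mathbb C^d$ by $\exp(Z)\cdot z=(e^{2\pi iZ_j}z_j)_j$; $T^d=\mathbb R^d/\mathbb Z^d$. $N=\ker(T^d\to\mathfrak d/Q)$, $N_{\mathbb C}=\ker(T^d_{\mathbb C}\to\mathfrak d_{\mathbb C}/Q)$, $A=\exp(i\mathfrak n)$. On $\mathbb C^d_\Delta$, $z\sim w$ iff $N\,\overline{Az}\cap\overline{Aw}\ne\emptyset$ (closures in $\mathbb C^d_\Delta$); $X_\Delta=\mathbb C^d_\Delta/\!/N_{\mathbb C}$ is the quotient with the quotient topology. For singular $F$, $\mathcal T_F$ is the set of classes of $z$ with $\overline{Az}\cap(\mathbb C^* )^{F^c}\neq\emptyset$; $\mathcal T_{\max}$ is the image of $\bigcup_{G\text{ regular}}(\mathbb C^* )^{G^c}$. The $N_{\mathbb C}$-orbit spaces $(\mathbb C^* )^{F^c}/N_{\mathbb C}$ carry the quotient topology. *)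

theory Defs
  imports "HOL-Analysis.Analysis"
begin

text \<open>The real vector space d is real^'n, its dual is identified with real^'n
 via the inner product. Facets are indexed by a finite type 'd, so C^d is complex^'d.
 A (relatively open) face F of the polytope is encoded by its index set I_F.\<close>

definition zspan :: "('a::real_vector) set \<Rightarrow> 'a set" where
  "zspan S = {x. \<exists>c::'a \<Rightarrow> int. x = (\<Sum>v\<in>S. real_of_int (c v) *\<^sub>R v)}"

definition quasilattice :: "(real^'n) set \<Rightarrow> bool" where
  "quasilattice Q \<longleftrightarrow> (\<exists>S. finite S \<and> span S = UNIV \<and> Q = zspan S)"

definition Delta :: "('d::finite \<Rightarrow> real^'n) \<Rightarrow> ('d \<Rightarrow> real) \<Rightarrow> (real^'n) set" where
  "Delta X lam = {\<mu>. \<forall>j. lam j \<le> \<mu> \<bullet> X j}"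

definition tight :: "('d::finite \<Rightarrow> real^'n) \<Rightarrow> ('d \<Rightarrow> real) \<Rightarrow> real^'n \<Rightarrow> 'd set" where
  "tight X lam \<mu> = {j. \<mu> \<bullet> X j = lam j}"

text \<open>index sets I_F of the faces F (including the interior, I = {})\<close>
definition face_idx :: "('d::finite \<Rightarrow> real^'n) \<Rightarrow> ('d \<Rightarrow> real) \<Rightarrow> 'd set set" where
  "face_idx X lam = {I. \<exists>\<mu>\<in>Delta X lam. tight X lam \<mu> = I}"

definition open_face :: "('d::finite \<Rightarrow> real^'n) \<Rightarrow> ('d \<Rightarrow> real) \<Rightarrow> 'd set \<Rightarrow> (real^'n) set" where
  "open_face X lam I = {\<mu>\<in>Delta X lam. tight X lam \<mu> = I}"

definition regular_face :: "('d::finite \<Rightarrow> real^'n) \<Rightarrow> ('d \<Rightarrow> real) \<Rightarrow> 'd set \<Rightarrow> bool" where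
  "regular_face X lam I \<longleftrightarrow> I \<in> face_idx X lam \<and>
     int (card I) = int CARD('n) - aff_dim (open_face X lam I)"

definition singular_face :: "('d::finite \<Rightarrow> real^'n) \<Rightarrow> ('d \<Rightarrow> real) \<Rightarrow> 'd set \<Rightarrow> bool" where
  "singular_face X lam I \<longleftrightarrow> I \<in> face_idx X lam \<and>
     int (card I) > int CARD('n) - aff_dim (open_face X lam I)"

text \<open>(C^*)^{F^c} for the face with index set I\<close>
definition Cstar :: "'d set \<Rightarrow> (complex^'d::finite) set" where
  "Cstar I = {z. \<forall>j. z $ j = 0 \<longleftrightarrow> j \<in> I}"

definition base_pt :: "'d set \<Rightarrow> complex^'d::finite" where
  "base_pt I = (\<chi> j. if j \<in> I then 0 else 1)"

definition CDelta :: "('d::finite \<Rightarrow> real^'n) \<Rightarrow> ('d \<Rightarrow> real) \<Rightarrow> (complex^'d) set" where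
  "CDelta X lam = {z. \<exists>I\<in>face_idx X lam. \<forall>j. j \<notin> I \<longrightarrow> z $ j \<noteq> 0}"

definition piR :: "('d::finite \<Rightarrow> real^'n) \<Rightarrow> real^'d \<Rightarrow> real^'n" where
  "piR X Y = (\<Sum>j\<in>UNIV. (Y $ j) *\<^sub>R X j)"

definition piC :: "('d::finite \<Rightarrow> real^'n) \<Rightarrow> complex^'d \<Rightarrow> complex^'n" where
  "piC X Z = (\<chi> k. \<Sum>j\<in>UNIV. Z $ j * complex_of_real (X j $ k))"

text \<open>the real vector space d as the real part of d_C\<close>
definition cvec :: "real^'a \<Rightarrow> complex^'a" where
  "cvec x = (\<chi> k. complex_of_real (x $ k))"

text \<open>action of exp(Z) in T^d_C on C^d\<close>
definition act :: "complex^'d \<Rightarrow> complex^'d \<Rightarrow> complex^'d" where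
  "act Z z = (\<chi> j. exp (2 * pi * \<i> * Z $ j) * z $ j)"

text \<open>N_C-orbit: N_C = {exp Z. piC Z in Q}\<close>
definition NC_orbit :: "('d::finite \<Rightarrow> real^'n) \<Rightarrow> (real^'n) set \<Rightarrow> complex^'d \<Rightarrow> (complex^'d) set" where
  "NC_orbit X Q z = {act Z z | Z. piC X Z \<in> cvec ` Q}"

text \<open>A-orbit, A = exp(i n), n = ker pi\<close>
definition A_orbit :: "('d::finite \<Rightarrow> real^'n) \<Rightarrow> complex^'d \<Rightarrow> (complex^'d) set" where
  "A_orbit X z = {act (\<chi> j. \<i> * complex_of_real (Y $ j)) z | Y. piR X Y = 0}"

definition A_clos :: "('d::finite \<Rightarrow> real^'n) \<Rightarrow> ('d \<Rightarrow> real) \<Rightarrow> complex^'d \<Rightarrow> (complex^'d) set" where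
  "A_clos X lam z = closure (A_orbit X z) \<inter> CDelta X lam"

text \<open>z ~ w iff N (closure A z) meets closure A w; N = {exp Y. Y real, pi Y in Q}\<close>
definition sim :: "('d::finite \<Rightarrow> real^'n) \<Rightarrow> ('d \<Rightarrow> real) \<Rightarrow> (real^'n) set \<Rightarrow>
    complex^'d \<Rightarrow> complex^'d \<Rightarrow> bool" where
  "sim X lam Q z w \<longleftrightarrow> z \<in> CDelta X lam \<and> w \<in> CDelta X lam \<and>
     (\<exists>Y. piR X Y \<in> Q \<and> act (cvec Y) ` A_clos X lam z \<inter> A_clos X lam w \<noteq> {})"

text \<open>class of z in X_Delta (w.r.t. the equivalence relation generated by sim)\<close>
definition Xcls :: "('d::finite \<Rightarrow> real^'n) \<Rightarrow> ('d \<Rightarrow> real) \<Rightarrow> (real^'n) set \<Rightarrow>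
    complex^'d \<Rightarrow> (complex^'d) set" where
  "Xcls X lam Q z = {w \<in> CDelta X lam. (symclp (sim X lam Q))\<^sup>*\<^sup>* z w}"

definition quot_top :: "'a topology \<Rightarrow> ('a \<Rightarrow> 'b) \<Rightarrow> 'b topology" where
  "quot_top T f = topology (\<lambda>U. U \<subseteq> f ` topspace T \<and> openin T {x \<in> topspace T. f x \<in> U})"

definition XDelta_top :: "('d::finite \<Rightarrow> real^'n) \<Rightarrow> ('d \<Rightarrow> real) \<Rightarrow> (real^'n) set \<Rightarrow>
    (complex^'d) set topology" where
  "XDelta_top X lam Q = quot_top (subtopology euclidean (CDelta X lam)) (Xcls X lam Q)"

definition orbit_top :: "('d::finite \<Rightarrow> real^'n) \<Rightarrow> (real^'n) set \<Rightarrow> 'd set \<Rightarrow>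
    (complex^'d) set topology" where
  "orbit_top X Q I = quot_top (subtopology euclidean (Cstar I)) (NC_orbit X Q)"

definition T_F :: "('d::finite \<Rightarrow> real^'n) \<Rightarrow> ('d \<Rightarrow> real) \<Rightarrow> (real^'n) set \<Rightarrow> 'd set \<Rightarrow>
    (complex^'d) set set" where
  "T_F X lam Q I = {Xcls X lam Q z | z. z \<in> CDelta X lam \<and> closure (A_orbit X z) \<inter> Cstar I \<noteq> {}}"

definition T_max :: "('d::finite \<Rightarrow> real^'n) \<Rightarrow> ('d \<Rightarrow> real) \<Rightarrow> (real^'n) set \<Rightarrow>
    (complex^'d) set set" where
  "T_max X lam Q = Xcls X lam Q ` (\<Union>I\<in>{I. regular_face X lam I}. Cstar I)"

end

theory Submission
  imports Defs
begin


lemma quot_top_istop: "istopology (\<lambda>U. U \<subseteq> f ` topspace T \<and> openin T {x \<in> topspace T. f x \<in> U})"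
  unfolding istopology_def
  apply (intro conjI allI impI)
  subgoal by auto
  subgoal for S U
    using openin_Int[of T "{x \<in> topspace T. f x \<in> S}" "{x \<in> topspace T. f x \<in> U}"]
    by (auto simp: Collect_conj_eq[symmetric] conj_ac)
  subgoal by auto
  subgoal for K
  proof -
    assume a: "\<forall>U\<in>K. U \<subseteq> f ` topspace T \<and> openin T {x \<in> topspace T. f x \<in> U}"
    have "{x \<in> topspace T. f x \<in> \<Union>K} = (\<Union>U\<in>K. {x \<in> topspace T. f x \<in> U})" by auto
    with a show ?thesis by auto
  qed
  done

lemma openin_quot_top: "openin (quot_top T f) U \<longleftrightarrow> U \<subseteq> f ` topspace T \<and> openin T {x \<in> topspace T. f x \<in> U}"
  unfolding quot_top_def using topology_inverse'[OF quot_top_istop[of f T]] by simp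

lemma topspace_quot_top: "topspace (quot_top T f) = f ` topspace T"
proof -
  have "{x \<in> topspace T. f x \<in> f ` topspace T} = topspace T" by auto
  then have "openin (quot_top T f) (f ` topspace T)" unfolding openin_quot_top by auto
  then have "f ` topspace T \<subseteq> topspace (quot_top T f)" by (rule openin_subset[THEN subset_trans]) auto
  moreover have "topspace (quot_top T f) \<subseteq> f ` topspace T"
    using openin_quot_top[of T f "topspace (quot_top T f)"] by auto
  ultimately show ?thesis by auto
qed



lemma act_nth [simp]: "act Z z $ j = exp (2 * pi * \<i> * Z $ j) * z $ j"
  by (simp add: act_def)

lemma act_add: "act Z (act Z' z) = act (Z + Z') z"
  by (simp add: vec_eq_iff distrib_left exp_add mult.assoc mult.left_commute)

lemma act_zero [simp]: "act 0 z = z"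
  by (simp add: vec_eq_iff)

lemma act_zero_iff [simp]: "act Z z $ j = 0 \<longleftrightarrow> z $ j = 0"
  by simp

lemma CDelta_pattern:
  assumes "\<And>j. z $ j = 0 \<longleftrightarrow> w $ j = 0" "z \<in> CDelta X lam"
  shows "w \<in> CDelta X lam"
  using assms unfolding CDelta_def by blast

lemma act_CDelta: "z \<in> CDelta X lam \<Longrightarrow> act Z z \<in> CDelta X lam"
  by (rule CDelta_pattern[of z]) auto

lemma act_CDelta_iff: "act Z z \<in> CDelta X lam \<longleftrightarrow> z \<in> CDelta X lam"
  by (metis CDelta_pattern act_zero_iff)

lemma act_imag_nth: "act (\<chi> j. \<i> * complex_of_real (W $ j)) u $ j = complex_of_real (exp (- 2 * pi * W $ j)) * u $ j"
proof -
  have "2 * pi * \<i> * (\<i> * complex_of_real (W $ j)) = complex_of_real (- 2 * pi * W $ j)"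
    by (simp add: algebra_simps)
  then show ?thesis by (simp add: exp_of_real del: of_real_minus)
qed

lemma piC_nth: "piC X Z $ k = (\<Sum>j\<in>UNIV. Z $ j * complex_of_real (X j $ k))"
  by (simp add: piC_def)

lemma piR_nth: "piR X R $ k = (\<Sum>j\<in>UNIV. R $ j * X j $ k)"
  by (simp add: piR_def sum_component)

lemma piC_add: "piC X (Z + Z') = piC X Z + piC X Z'"
  by (simp add: vec_eq_iff piC_nth distrib_right sum.distrib)

lemma piC_minus: "piC X (Z - Z') = piC X Z - piC X Z'"
  by (simp add: vec_eq_iff piC_nth left_diff_distrib sum_subtractf)

lemma piC_uminus: "piC X (- Z) = - piC X Z"
  by (simp add: vec_eq_iff piC_nth sum_negf)

lemma piC_real: "piC X (\<chi> j. a * complex_of_real (R $ j)) = (\<chi> k. a * complex_of_real (piR X R $ k))"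
  by (simp add: vec_eq_iff piC_nth piR_nth sum_distrib_left mult.assoc)

lemma piC_cvec: "piC X (cvec R) = cvec (piR X R)"
  using piC_real[of X 1 R] by (simp add: cvec_def)

lemma piR_add: "piR X (R + R') = piR X R + piR X R'"
  by (simp add: piR_def scaleR_add_left sum.distrib)

lemma piR_uminus: "piR X (- R) = - piR X R"
  by (simp add: piR_def sum_negf)

lemma cvec_add: "cvec (a + b) = cvec a + cvec b"
  by (simp add: cvec_def vec_eq_iff)

lemma cvec_uminus: "cvec (- a) = - cvec a"
  by (simp add: cvec_def vec_eq_iff)

lemma cvec_inj: "cvec a = cvec b \<longleftrightarrow> a = b"
  by (simp add: cvec_def vec_eq_iff)

lemma cvec_zero [simp]: "cvec 0 = 0"
  by (simp add: cvec_def vec_eq_iff)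

definition reV :: "complex^'a \<Rightarrow> real^'a" where "reV Z = (\<chi> j. Re (Z $ j))"
definition imV :: "complex^'a \<Rightarrow> real^'a" where "imV Z = (\<chi> j. Im (Z $ j))"

lemma Z_decomp: "Z = cvec (reV Z) + (\<chi> j. \<i> * complex_of_real (imV Z $ j))"
  by (simp add: vec_eq_iff cvec_def reV_def imV_def complex_eq_iff)

lemma piC_decomp: "piC X Z = cvec (piR X (reV Z)) + (\<chi> k. \<i> * complex_of_real (piR X (imV Z) $ k))"
  by (subst Z_decomp) (simp add: piC_add piC_cvec piC_real)

lemma piC_in_cvecQ:
  assumes "piC X Z \<in> cvec ` Q"
  shows "piR X (reV Z) \<in> Q" "piR X (imV Z) = 0"
proof -
  obtain q where q: "q \<in> Q" "piC X Z = cvec q" using assms by auto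
  have "\<forall>k. piR X (reV Z) $ k = q $ k \<and> piR X (imV Z) $ k = 0"
  proof
    fix k
    have "(piC X Z) $ k = cvec q $ k" using q by simp
    then show "piR X (reV Z) $ k = q $ k \<and> piR X (imV Z) $ k = 0"
      by (simp add: piC_decomp cvec_def complex_eq_iff)
  qed
  then have "piR X (reV Z) = q" "piR X (imV Z) = 0" by (auto simp: vec_eq_iff)
  then show "piR X (reV Z) \<in> Q" "piR X (imV Z) = 0" using q by auto
qed



lemma exp_ii: "exp (2 * pi * \<i> * (\<i> * complex_of_real w)) = complex_of_real (exp (- 2 * pi * w))"
proof -
  have "2 * pi * \<i> * (\<i> * complex_of_real w) = complex_of_real (- 2 * pi * w)"
    by (simp add: algebra_simps)
  then show ?thesis by (simp add: exp_of_real del: of_real_minus)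
qed

lemma closure_A_lemma:
  fixes u p :: "complex^'d::finite" and X :: "'d \<Rightarrow> real^'n"
  assumes uI: "\<forall>j. j \<notin> I \<longrightarrow> u $ j \<noteq> 0"
    and pcl: "p \<in> closure (A_orbit X u)" and pC: "p \<in> CDelta X lam"
    and mu0: "mu0 \<in> Delta X lam" "tight X lam mu0 = I"
  shows "(\<forall>j. j \<notin> I \<longrightarrow> p $ j \<noteq> 0) \<and>
         (\<exists>V. (\<forall>j. j \<notin> I \<longrightarrow> p $ j = exp (2 * pi * \<i> * V $ j) * u $ j) \<and> piC X V = 0)"
proof -
  obtain f where f: "\<And>n. f n \<in> A_orbit X u" "f \<longlonglongrightarrow> p"
    using pcl unfolding closure_sequential by blast
  have "\<forall>n. \<exists>W. piR X W = 0 \<and> f n = act (\<chi> j. \<i> * complex_of_real (W $ j)) u"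
    using f(1) unfolding A_orbit_def by blast
  then obtain W where W: "\<And>n. piR X (W n) = 0" "\<And>n. f n = act (\<chi> j. \<i> * complex_of_real (W n $ j)) u"
    by metis
  define e where "e k n = exp (- 2 * pi * W n $ k)" for k n
  have fe: "f n $ k = complex_of_real (e k n) * u $ k" for n k
    by (simp only: W(2) act_nth vec_lambda_beta exp_ii e_def)
  have fk: "(\<lambda>n. f n $ k) \<longlonglongrightarrow> p $ k" for k
    using f(2) by (rule tendsto_vec_nth)
  define L where "L k = Re (p $ k / u $ k)" for k
  have eL: "(\<lambda>n. e k n) \<longlonglongrightarrow> L k" and pL: "p $ k = complex_of_real (L k) * u $ k"
    and Lnn: "L k \<ge> 0" if uk: "u $ k \<noteq> 0" for k
  proof -
    have "(\<lambda>n. f n $ k / u $ k) \<longlonglongrightarrow> p $ k / u $ k"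
      using fk by (rule tendsto_divide) (use uk in auto)
    then have c: "(\<lambda>n. complex_of_real (e k n)) \<longlonglongrightarrow> p $ k / u $ k"
      using uk by (simp add: fe)
    from tendsto_Re[OF c] show "(\<lambda>n. e k n) \<longlonglongrightarrow> L k" by (simp add: L_def)
    from tendsto_Im[OF c] have "(\<lambda>n. 0) \<longlonglongrightarrow> Im (p $ k / u $ k)" by simp
    then have "Im (p $ k / u $ k) = 0" using LIMSEQ_unique tendsto_const by blast
    then have "p $ k / u $ k = complex_of_real (L k)" by (simp add: L_def complex_eq_iff)
    then show "p $ k = complex_of_real (L k) * u $ k" using uk by (simp add: field_simps)
    show "L k \<ge> 0"
      using \<open>(\<lambda>n. e k n) \<longlonglongrightarrow> L k\<close> by (rule LIMSEQ_le_const) (auto simp: e_def)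
  qed
  have pu0: "p $ k = 0" if "u $ k = 0" for k
  proof -
    have "(\<lambda>n. f n $ k) \<longlonglongrightarrow> 0" using that by (simp add: fe)
    then show ?thesis using fk LIMSEQ_unique by blast
  qed
  have We: "W n $ k = - ln (e k n) / (2 * pi)" for n k
    by (simp add: e_def)
  have Wlim: "(\<lambda>n. W n $ k) \<longlonglongrightarrow> - ln (L k) / (2 * pi)" if "u $ k \<noteq> 0" "p $ k \<noteq> 0" for k
  proof -
    have "L k \<noteq> 0" using pL[OF that(1)] that(2) by auto
    then have "L k > 0" using Lnn[OF that(1)] by auto
    have "(\<lambda>n. - ln (e k n) / (2 * pi)) \<longlonglongrightarrow> - ln (L k) / (2 * pi)"
      by (intro tendsto_intros eL that) (use \<open>L k > 0\<close> in auto)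
    then show ?thesis by (simp add: We)
  qed
  have sum0: "(\<Sum>k\<in>UNIV. W n $ k * (d \<bullet> X k)) = 0" for n d
  proof -
    have "d \<bullet> piR X (W n) = 0" by (simp add: W(1))
    then show ?thesis by (simp add: piR_def inner_sum_right mult.commute)
  qed
  obtain L0 where L0: "L0 \<in> face_idx X lam" "\<forall>j. j \<notin> L0 \<longrightarrow> p $ j \<noteq> 0"
    using pC unfolding CDelta_def by blast
  obtain mu1 where mu1: "mu1 \<in> Delta X lam" "tight X lam mu1 = L0"
    using L0(1) unfolding face_idx_def by blast
  have pnz: "\<forall>j. j \<notin> I \<longrightarrow> p $ j \<noteq> 0"
  proof (rule ccontr)
    assume "\<not> (\<forall>j. j \<notin> I \<longrightarrow> p $ j \<noteq> 0)"
    then obtain j0 where j0: "j0 \<notin> I" "p $ j0 = 0" by blast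
    define d where "d = mu0 - mu1"
    define c where "c k = d \<bullet> X k" for k
    have ge: "lam k \<le> mu \<bullet> X k" if "mu \<in> Delta X lam" for mu k
      using that by (simp add: Delta_def)
    have mu1t: "mu1 \<bullet> X k = lam k" if "p $ k = 0" for k
      using L0(2) mu1(2) that unfolding tight_def by blast
    have c_nonneg: "c k \<ge> 0" if "p $ k = 0" for k
      using mu1t[OF that] ge[OF mu0(1), of k] by (simp add: c_def d_def inner_diff_left)
    have c_zero: "c k = 0" if "u $ k = 0" for k
    proof -
      have "k \<in> I" using uI that by blast
      then have "mu0 \<bullet> X k = lam k" using mu0(2) unfolding tight_def by blast
      then show ?thesis using mu1t[OF pu0[OF that]] by (simp add: c_def d_def inner_diff_left)
    qed
    have cj0: "c j0 > 0"
    proof -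
      have "mu0 \<bullet> X j0 \<noteq> lam j0" using mu0(2) j0(1) unfolding tight_def by blast
      then show ?thesis using mu1t[OF j0(2)] ge[OF mu0(1), of j0] by (simp add: c_def d_def inner_diff_left)
    qed
    have uj0: "u $ j0 \<noteq> 0" using uI j0 by blast
    define S3 where "S3 = {k. u $ k \<noteq> 0 \<and> p $ k \<noteq> 0}"
    define B where "B k = \<bar>- ln (L k) / (2 * pi) * c k\<bar> + 1" for k
    define g where "g k = (if k \<in> S3 then - B k else 0)" for k
    have ev1: "eventually (\<lambda>n. \<forall>k. W n $ k * c k \<ge> g k) sequentially"
    proof (rule eventually_all_finite)
      fix k
      show "eventually (\<lambda>n. W n $ k * c k \<ge> g k) sequentially"
      proof (cases "u $ k = 0")
        case True
        then show ?thesis by (simp add: c_zero g_def S3_def)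
      next
        case uk: False
        show ?thesis
        proof (cases "p $ k = 0")
          case True
          have "L k = 0" using pL[OF uk] True uk by simp
          then have "eventually (\<lambda>n. e k n < 1) sequentially"
            using eL[OF uk] by (intro order_tendstoD(2)) auto
          then show ?thesis
          proof (rule eventually_mono)
            fix n assume "e k n < 1"
            then have "W n $ k > 0" by (simp add: e_def zero_less_mult_iff)
            then show "W n $ k * c k \<ge> g k" using c_nonneg[OF True] True by (simp add: g_def S3_def)
          qed
        next
          case False
          have "(\<lambda>n. W n $ k * c k) \<longlonglongrightarrow> - ln (L k) / (2 * pi) * c k"
            by (intro tendsto_intros Wlim uk False)
          then have "eventually (\<lambda>n. W n $ k * c k > - ln (L k) / (2 * pi) * c k - 1) sequentially"
            by (intro order_tendstoD(1)) auto
          then show ?thesis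
          proof (rule eventually_mono)
            fix n assume a: "W n $ k * c k > - ln (L k) / (2 * pi) * c k - 1"
            have "- \<bar>- ln (L k) / (2 * pi) * c k\<bar> \<le> - ln (L k) / (2 * pi) * c k" by linarith
            then show "W n $ k * c k \<ge> g k" using a uk False by (simp add: g_def S3_def B_def)
          qed
        qed
      qed
    qed
    define M where "M = ((\<Sum>k\<in>S3. B k) + 1) / c j0"
    have Lj0: "L j0 = 0" using pL[OF uj0] j0(2) uj0 by simp
    have ev2: "eventually (\<lambda>n. e j0 n < exp (- 2 * pi * M)) sequentially"
      using eL[OF uj0] Lj0 by (intro order_tendstoD(2)) auto
    obtain n where n1: "\<forall>k. W n $ k * c k \<ge> g k" and n2: "e j0 n < exp (- 2 * pi * M)"
      using eventually_conj[OF ev1 ev2] eventually_sequentially by auto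
    have "W n $ j0 > M" using n2 by (simp add: e_def)
    then have t0: "W n $ j0 * c j0 > (\<Sum>k\<in>S3. B k) + 1"
      using cj0 by (simp add: M_def field_simps)
    have j0S3: "j0 \<notin> S3" using j0 by (simp add: S3_def)
    have "(\<Sum>k\<in>UNIV - {j0}. g k) = (\<Sum>k\<in>UNIV. g k)"
      using j0S3 by (subst sum.remove[of UNIV j0]) (auto simp: g_def)
    also have "\<dots> = - (\<Sum>k\<in>S3. B k)"
      by (simp add: g_def sum.If_cases sum_negf)
    finally have gs: "(\<Sum>k\<in>UNIV - {j0}. g k) = - (\<Sum>k\<in>S3. B k)" .
    have "(\<Sum>k\<in>UNIV - {j0}. W n $ k * c k) \<ge> (\<Sum>k\<in>UNIV - {j0}. g k)"
      using n1 by (intro sum_mono) auto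
    then have "(\<Sum>k\<in>UNIV. W n $ k * c k) > 0"
      using t0 gs by (subst sum.remove[of UNIV j0]) auto
    moreover have "(\<Sum>k\<in>UNIV. W n $ k * c k) = 0" using sum0[of n d] by (simp add: c_def)
    ultimately show False by simp
  qed
  define SI where "SI = range (\<lambda>c::real^'d. \<Sum>j\<in>I. c $ j *\<^sub>R X j)"
  have "subspace SI" unfolding SI_def
    by (rule linear_subspace_image[OF _ subspace_UNIV])
       (auto simp: linear_iff scaleR_add_left sum.distrib scaleR_sum_right)
  then have clSI: "closed SI" by (rule closed_subspace)
  define w where "w k = - ln (L k) / (2 * pi)" for k
  have inSI: "(\<Sum>j\<in>-I. W n $ j *\<^sub>R X j) \<in> SI" for n
  proof -
    have "(\<Sum>j\<in>UNIV. W n $ j *\<^sub>R X j) = 0" using W(1)[of n] by (simp add: piR_def)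
    then have "(\<Sum>j\<in>I. W n $ j *\<^sub>R X j) + (\<Sum>j\<in>-I. W n $ j *\<^sub>R X j) = 0"
      using sum.Int_Diff[of UNIV "\<lambda>j. W n $ j *\<^sub>R X j" I] by (simp add: Compl_eq_Diff_UNIV)
    then have "(\<Sum>j\<in>-I. W n $ j *\<^sub>R X j) = (\<Sum>j\<in>I. (- W n) $ j *\<^sub>R X j)"
      by (simp add: sum_negf eq_neg_iff_add_eq_0 add.commute)
    then show ?thesis unfolding SI_def by blast
  qed
  have "(\<lambda>n. \<Sum>j\<in>-I. W n $ j *\<^sub>R X j) \<longlonglongrightarrow> (\<Sum>j\<in>-I. w j *\<^sub>R X j)"
  proof (intro tendsto_sum tendsto_scaleR tendsto_const)
    fix j assume "j \<in> - I"
    then show "(\<lambda>n. W n $ j) \<longlonglongrightarrow> w j" unfolding w_def using uI pnz by (intro Wlim) auto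
  qed
  then have "(\<Sum>j\<in>-I. w j *\<^sub>R X j) \<in> SI"
    by (rule closed_sequentially[OF clSI inSI])
  then obtain cI :: "real^'d" where cI: "(\<Sum>j\<in>-I. w j *\<^sub>R X j) = (\<Sum>j\<in>I. cI $ j *\<^sub>R X j)"
    unfolding SI_def by blast
  define R where "R = (\<chi> j. if j \<in> I then - cI $ j else w j)"
  define V where "V = (\<chi> j. \<i> * complex_of_real (R $ j))"
  have "piR X R = (\<Sum>j\<in>I. R $ j *\<^sub>R X j) + (\<Sum>j\<in>-I. R $ j *\<^sub>R X j)"
    using sum.Int_Diff[of UNIV "\<lambda>j. R $ j *\<^sub>R X j" I] by (simp add: piR_def Compl_eq_Diff_UNIV)
  also have "\<dots> = 0"
  proof -
    have "(\<Sum>j\<in>I. R $ j *\<^sub>R X j) = - (\<Sum>j\<in>I. cI $ j *\<^sub>R X j)"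
      by (simp add: R_def sum_negf[symmetric])
    moreover have "(\<Sum>j\<in>-I. R $ j *\<^sub>R X j) = (\<Sum>j\<in>-I. w j *\<^sub>R X j)"
      by (rule sum.cong) (auto simp: R_def)
    ultimately show ?thesis using cI by simp
  qed
  finally have "piR X R = 0" .
  then have "piC X V = 0" unfolding V_def piC_real by (simp add: vec_eq_iff)
  moreover have "p $ j = exp (2 * pi * \<i> * V $ j) * u $ j" if "j \<notin> I" for j
  proof -
    have uj: "u $ j \<noteq> 0" and pj: "p $ j \<noteq> 0" using uI pnz that by auto
    have "L j \<noteq> 0" using pL[OF uj] pj by auto
    then have Lp: "L j > 0" using Lnn[OF uj] by auto
    have Vj: "V $ j = \<i> * complex_of_real (w j)" using that by (simp add: V_def R_def)
    have "exp (2 * pi * \<i> * V $ j) = complex_of_real (exp (- 2 * pi * w j))"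
      by (simp only: Vj exp_ii)
    also have "- 2 * pi * w j = ln (L j)" by (simp add: w_def)
    finally show ?thesis using Lp pL[OF uj] by simp
  qed
  ultimately show ?thesis using pnz by blast
qed



lemma zspan_0: "0 \<in> zspan S"
  unfolding zspan_def by (rule CollectI, rule exI[of _ "\<lambda>_. 0"]) simp

lemma zspan_add: "a \<in> zspan S \<Longrightarrow> b \<in> zspan S \<Longrightarrow> a + b \<in> zspan S"
  unfolding zspan_def
proof (clarify)
  fix c c' :: "'a \<Rightarrow> int"
  show "\<exists>c''. (\<Sum>v\<in>S. real_of_int (c v) *\<^sub>R v) + (\<Sum>v\<in>S. real_of_int (c' v) *\<^sub>R v) = (\<Sum>v\<in>S. real_of_int (c'' v) *\<^sub>R v)"
    by (rule exI[of _ "\<lambda>v. c v + c' v"]) (simp add: sum.distrib scaleR_add_left)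
qed

lemma zspan_uminus: "a \<in> zspan S \<Longrightarrow> - a \<in> zspan S"
  unfolding zspan_def
proof (clarify)
  fix c :: "'a \<Rightarrow> int"
  show "\<exists>c''. - (\<Sum>v\<in>S. real_of_int (c v) *\<^sub>R v) = (\<Sum>v\<in>S. real_of_int (c'' v) *\<^sub>R v)"
    by (rule exI[of _ "\<lambda>v. - c v"]) (simp add: sum_negf)
qed

lemma ql_0: "quasilattice Q \<Longrightarrow> 0 \<in> Q"
  unfolding quasilattice_def using zspan_0 by blast
lemma ql_add: "quasilattice Q \<Longrightarrow> a \<in> Q \<Longrightarrow> b \<in> Q \<Longrightarrow> a + b \<in> Q"
  unfolding quasilattice_def using zspan_add by blast
lemma ql_uminus: "quasilattice Q \<Longrightarrow> a \<in> Q \<Longrightarrow> - a \<in> Q"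
  unfolding quasilattice_def using zspan_uminus by blast

lemma cQ_0: "quasilattice Q \<Longrightarrow> 0 \<in> cvec ` Q"
  using ql_0 cvec_zero by (metis image_eqI)
lemma cQ_add: assumes "quasilattice Q" "a \<in> cvec ` Q" "b \<in> cvec ` Q" shows "a + b \<in> cvec ` Q"
proof -
  obtain x y where "x \<in> Q" "y \<in> Q" "a = cvec x" "b = cvec y" using assms by auto
  then show ?thesis using ql_add[OF assms(1)] cvec_add by (metis image_eqI)
qed
lemma cQ_uminus: assumes "quasilattice Q" "a \<in> cvec ` Q" shows "- a \<in> cvec ` Q"
proof -
  obtain x where "x \<in> Q" "a = cvec x" using assms by auto
  then show ?thesis using ql_uminus[OF assms(1)] cvec_uminus by (metis image_eqI)
qed

definition Erel :: "('d::finite \<Rightarrow> real^'n) \<Rightarrow> (real^'n) set \<Rightarrow> 'd set \<Rightarrow> complex^'d \<Rightarrow> complex^'d \<Rightarrow> bool" where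
  "Erel X Q I u v \<longleftrightarrow> (\<exists>V. (\<forall>j. j \<notin> I \<longrightarrow> v $ j = exp (2 * pi * \<i> * V $ j) * u $ j) \<and> piC X V \<in> cvec ` Q)"

lemma Erel_refl: assumes "quasilattice Q" shows "Erel X Q I u u"
proof -
  have "piC X 0 = 0" by (simp add: vec_eq_iff piC_nth)
  then show ?thesis unfolding Erel_def using cQ_0[OF \<open>quasilattice Q\<close>] by (intro exI[of _ 0]) simp
qed

lemma Erel_sym: assumes "quasilattice Q" "Erel X Q I u v" shows "Erel X Q I v u"
proof -
  obtain V where V: "\<forall>j. j \<notin> I \<longrightarrow> v $ j = exp (2 * pi * \<i> * V $ j) * u $ j" "piC X V \<in> cvec ` Q"
    using assms(2) unfolding Erel_def by blast
  have "u $ j = exp (2 * pi * \<i> * (- V) $ j) * v $ j" if "j \<notin> I" for j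
  proof -
    have e: "exp (2 * pi * \<i> * (- V) $ j) * exp (2 * pi * \<i> * V $ j) = 1"
      by (simp add: exp_add[symmetric])
    have "exp (2 * pi * \<i> * (- V) $ j) * v $ j = (exp (2 * pi * \<i> * (- V) $ j) * exp (2 * pi * \<i> * V $ j)) * u $ j"
      using V(1) that by (simp add: mult.assoc)
    then show ?thesis using e by simp
  qed
  moreover have "piC X (- V) \<in> cvec ` Q" using V(2) assms(1) by (simp add: piC_uminus cQ_uminus)
  ultimately show ?thesis unfolding Erel_def by blast
qed

lemma Erel_trans: assumes "quasilattice Q" "Erel X Q I u v" "Erel X Q I v w" shows "Erel X Q I u w"
proof -
  obtain V where V: "\<forall>j. j \<notin> I \<longrightarrow> v $ j = exp (2 * pi * \<i> * V $ j) * u $ j" "piC X V \<in> cvec ` Q"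
    using assms(2) unfolding Erel_def by blast
  obtain V' where V': "\<forall>j. j \<notin> I \<longrightarrow> w $ j = exp (2 * pi * \<i> * V' $ j) * v $ j" "piC X V' \<in> cvec ` Q"
    using assms(3) unfolding Erel_def by blast
  have "w $ j = exp (2 * pi * \<i> * (V' + V) $ j) * u $ j" if "j \<notin> I" for j
    using V(1) V'(1) that by (simp add: distrib_left exp_add)
  moreover have "piC X (V' + V) \<in> cvec ` Q" using V(2) V'(2) assms(1) by (simp add: piC_add cQ_add)
  ultimately show ?thesis unfolding Erel_def by blast
qed

definition UI :: "'d set \<Rightarrow> (complex^'d::finite) set" where
  "UI I = {u. \<forall>j. j \<notin> I \<longrightarrow> u $ j \<noteq> 0}"

lemma C_lemma:
  assumes "quasilattice Q" "u \<in> UI I" "p \<in> closure (A_orbit X u)" "p \<in> CDelta X lam"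
    "mu0 \<in> Delta X lam" "tight X lam mu0 = I"
  shows "p \<in> UI I \<and> Erel X Q I u p"
proof -
  from closure_A_lemma[of I u p X lam mu0] assms
  obtain V where "\<forall>j. j \<notin> I \<longrightarrow> p $ j \<noteq> 0" "\<forall>j. j \<notin> I \<longrightarrow> p $ j = exp (2 * pi * \<i> * V $ j) * u $ j" "piC X V = 0"
    unfolding UI_def by blast
  then show ?thesis unfolding UI_def Erel_def using cQ_0[OF assms(1)] by auto
qed

lemma Erel_N:
  assumes "piR X Y \<in> Q" shows "Erel X Q I p (act (cvec Y) p)"
  unfolding Erel_def using assms by (intro exI[of _ "cvec Y"]) (auto simp: piC_cvec)

lemma act_UI: "act Z p \<in> UI I \<longleftrightarrow> p \<in> UI I"
  by (simp add: UI_def)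

lemma closure_A_zero:
  assumes "v $ j = 0" "q \<in> closure (A_orbit X v)" shows "q $ j = 0"
proof -
  have "A_orbit X v \<subseteq> {x. x $ j = 0}" using assms(1) by (auto simp: A_orbit_def)
  moreover have "closed {x::complex^'a. x $ j = 0}"
    by (intro closed_Collect_eq continuous_intros)
  ultimately have "closure (A_orbit X v) \<subseteq> {x. x $ j = 0}" by (rule closure_minimal)
  then show ?thesis using assms(2) by auto
qed

lemma closure_UI: "q \<in> closure (A_orbit X v) \<Longrightarrow> q \<in> UI I \<Longrightarrow> v \<in> UI I"
  unfolding UI_def using closure_A_zero by blast

lemma step_lemma:
  assumes Q: "quasilattice Q" and u: "u \<in> UI I" and mu0: "mu0 \<in> Delta X lam" "tight X lam mu0 = I"
    and s: "symclp (sim X lam Q) u v"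
  shows "v \<in> UI I \<and> Erel X Q I u v"
  using s unfolding symclp_def
proof
  assume "sim X lam Q u v"
  then obtain Y p where Y: "piR X Y \<in> Q" "p \<in> A_clos X lam u" "act (cvec Y) p \<in> A_clos X lam v"
    unfolding sim_def by blast
  have 1: "p \<in> UI I \<and> Erel X Q I u p"
    using Y(2) by (intro C_lemma[OF Q u _ _ mu0]) (auto simp: A_clos_def)
  then have 2: "act (cvec Y) p \<in> UI I" by (simp add: act_UI)
  have v: "v \<in> UI I" using Y(3) 2 closure_UI by (auto simp: A_clos_def)
  have 3: "Erel X Q I v (act (cvec Y) p)"
    using Y(3) C_lemma[OF Q v _ _ mu0, of "act (cvec Y) p"] by (auto simp: A_clos_def)
  have "Erel X Q I u (act (cvec Y) p)" using Erel_trans[OF Q conjunct2[OF 1] Erel_N[OF Y(1)]] .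
  then have "Erel X Q I u v" using Erel_trans[OF Q _ Erel_sym[OF Q 3]] by blast
  then show ?thesis using v by blast
next
  assume "sim X lam Q v u"
  then obtain Y p where Y: "piR X Y \<in> Q" "p \<in> A_clos X lam v" "act (cvec Y) p \<in> A_clos X lam u"
    unfolding sim_def by blast
  have 1: "act (cvec Y) p \<in> UI I \<and> Erel X Q I u (act (cvec Y) p)"
    using Y(3) by (intro C_lemma[OF Q u _ _ mu0]) (auto simp: A_clos_def)
  then have p: "p \<in> UI I" by (simp add: act_UI)
  have v: "v \<in> UI I" using Y(2) p closure_UI by (auto simp: A_clos_def)
  have 3: "Erel X Q I v p"
    using Y(2) C_lemma[OF Q v _ _ mu0, of p] by (auto simp: A_clos_def)
  have "Erel X Q I u p" using Erel_trans[OF Q conjunct2[OF 1] Erel_sym[OF Q Erel_N[OF Y(1)]]] .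
  then have "Erel X Q I u v" using Erel_trans[OF Q _ Erel_sym[OF Q 3]] by blast
  then show ?thesis using v by blast
qed

lemma chain_lemma:
  assumes Q: "quasilattice Q" and u: "u \<in> UI I" and mu0: "mu0 \<in> Delta X lam" "tight X lam mu0 = I"
    and c: "(symclp (sim X lam Q))\<^sup>*\<^sup>* u w"
  shows "w \<in> UI I \<and> Erel X Q I u w"
  using c
proof (induction rule: rtranclp_induct)
  case base
  then show ?case using u Erel_refl[OF Q] by blast
next
  case (step y z)
  have yz: "z \<in> UI I \<and> Erel X Q I y z" using step_lemma[OF Q _ mu0, of y z] step by blast
  then show ?case using Erel_trans[OF Q conjunct2[OF step.IH] conjunct2[OF yz]] by blast
qed



lemma A_orbit_self: "u \<in> A_orbit X u"
proof -
  have "act (\<chi> j. \<i> * complex_of_real ((0::real^'a) $ j)) u = u" by (simp add: vec_eq_iff)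
  moreover have "piR X 0 = 0" by (simp add: piR_def)
  ultimately show ?thesis unfolding A_orbit_def by force
qed

lemma A_clos_self: "u \<in> CDelta X lam \<Longrightarrow> u \<in> A_clos X lam u"
  unfolding A_clos_def using A_orbit_self closure_subset by blast

lemma nc_sim:
  assumes z: "z \<in> CDelta X lam" and x: "x \<in> NC_orbit X Q z"
  shows "sim X lam Q z x"
proof -
  obtain Z where Z: "x = act Z z" "piC X Z \<in> cvec ` Q" using x unfolding NC_orbit_def by blast
  define Wc where "Wc = (\<chi> j. \<i> * complex_of_real (imV Z $ j))"
  have Y: "piR X (reV Z) \<in> Q" and W0: "piR X (imV Z) = 0" using piC_in_cvecQ[OF Z(2)] by auto
  have "x = act (cvec (reV Z)) (act Wc z)"
    using Z(1) Z_decomp[of Z] by (simp add: act_add Wc_def)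
  moreover have "act Wc z \<in> A_orbit X z" unfolding A_orbit_def Wc_def using W0 by blast
  then have "act Wc z \<in> A_clos X lam z" unfolding A_clos_def using closure_subset act_CDelta[OF z] by blast
  moreover have xC: "x \<in> CDelta X lam" using Z(1) act_CDelta[OF z] by simp
  ultimately show ?thesis unfolding sim_def using z Y A_clos_self[OF xC] by blast
qed

lemma Xcls_sim:
  assumes "sim X lam Q z x" shows "Xcls X lam Q z = Xcls X lam Q x"
proof -
  have s1: "symclp (sim X lam Q) z x" and s2: "symclp (sim X lam Q) x z" using assms by (auto simp: symclp_def)
  show ?thesis unfolding Xcls_def
    using converse_rtranclp_into_rtranclp[of "symclp (sim X lam Q)" z x, OF s1]
      converse_rtranclp_into_rtranclp[of "symclp (sim X lam Q)" x z, OF s2] by blast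
qed

lemma Xcls_self: "z \<in> CDelta X lam \<Longrightarrow> z \<in> Xcls X lam Q z"
  unfolding Xcls_def by simp

lemma face_mu: "I \<in> face_idx X lam \<Longrightarrow> \<exists>mu0. mu0 \<in> Delta X lam \<and> tight X lam mu0 = I"
  unfolding face_idx_def by blast

lemma Cstar_UI: "Cstar I \<subseteq> UI I"
  unfolding Cstar_def UI_def by auto

lemma UI_CDelta: "I \<in> face_idx X lam \<Longrightarrow> UI I \<subseteq> CDelta X lam"
  unfolding UI_def CDelta_def by blast

lemma Cstar_CDelta: "I \<in> face_idx X lam \<Longrightarrow> Cstar I \<subseteq> CDelta X lam"
  using Cstar_UI UI_CDelta by blast

lemma chain_Erel:
  assumes Q: "quasilattice Q" and I: "I \<in> face_idx X lam" and u: "u \<in> UI I"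
    and w: "w \<in> Xcls X lam Q u"
  shows "w \<in> UI I \<and> Erel X Q I u w"
proof -
  obtain mu0 where "mu0 \<in> Delta X lam" "tight X lam mu0 = I" using face_mu[OF I] by blast
  then show ?thesis using chain_lemma[OF Q u] w unfolding Xcls_def by blast
qed

lemma Erel_Cstar_NC:
  assumes "z \<in> Cstar I" "w \<in> Cstar I" "Erel X Q I z w" shows "w \<in> NC_orbit X Q z"
proof -
  obtain V where V: "\<forall>j. j \<notin> I \<longrightarrow> w $ j = exp (2 * pi * \<i> * V $ j) * z $ j" "piC X V \<in> cvec ` Q"
    using assms(3) unfolding Erel_def by blast
  have "w $ j = act V z $ j" for j
  proof (cases "j \<in> I")
    case True
    then have "w $ j = 0" "z $ j = 0" using assms(1,2) by (auto simp: Cstar_def)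
    then show ?thesis by simp
  next
    case False then show ?thesis using V(1) by simp
  qed
  then have "w = act V z" by (simp add: vec_eq_iff)
  then show ?thesis unfolding NC_orbit_def using V(2) by blast
qed

lemma class_iff:
  assumes Q: "quasilattice Q" and I: "I \<in> face_idx X lam" and z: "z \<in> Cstar I" and w: "w \<in> Cstar I"
  shows "Xcls X lam Q z = Xcls X lam Q w \<longleftrightarrow> w \<in> NC_orbit X Q z"
proof
  assume e: "Xcls X lam Q z = Xcls X lam Q w"
  have "w \<in> Xcls X lam Q z" using e Xcls_self Cstar_CDelta[OF I] w by blast
  then have "Erel X Q I z w" using chain_Erel[OF Q I] z Cstar_UI by blast
  then show "w \<in> NC_orbit X Q z" using Erel_Cstar_NC z w by blast
next
  assume "w \<in> NC_orbit X Q z"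
  then show "Xcls X lam Q z = Xcls X lam Q w" using Xcls_sim nc_sim Cstar_CDelta[OF I] z by blast
qed

lemma Cstar_rep: "Cstar I = {act Z (base_pt I) | Z. True}"
proof (intro set_eqI iffI)
  fix z assume z: "z \<in> Cstar I"
  define Z where "Z = (\<chi> j. Ln (z $ j) / (2 * pi * \<i>))"
  have "act Z (base_pt I) = z"
  proof (subst vec_eq_iff, intro allI)
    fix j show "act Z (base_pt I) $ j = z $ j"
    proof (cases "j \<in> I")
      case True then show ?thesis using z by (simp add: base_pt_def Cstar_def)
    next
      case False
      then have "z $ j \<noteq> 0" using z by (simp add: Cstar_def)
      then show ?thesis using False by (simp add: base_pt_def Z_def)
    qed
  qed
  then show "z \<in> {act Z (base_pt I) | Z. True}" by blast
next
  fix z assume "z \<in> {act Z (base_pt I) | Z. True}"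
  then show "z \<in> Cstar I" by (auto simp: Cstar_def base_pt_def split: if_splits)
qed

lemma base_Cstar: "base_pt I \<in> Cstar I"
  by (auto simp: Cstar_def base_pt_def)

lemma Xcls_act_eq:
  assumes I: "I \<in> face_idx X lam" and e: "piC X Z - piC X Z' \<in> cvec ` Q"
  shows "Xcls X lam Q (act Z (base_pt I)) = Xcls X lam Q (act Z' (base_pt I))"
proof -
  have C: "act Z' (base_pt I) \<in> CDelta X lam" using act_CDelta Cstar_CDelta[OF I] base_Cstar by blast
  have "act Z (base_pt I) = act (Z - Z') (act Z' (base_pt I))" by (simp add: act_add)
  then have "act Z (base_pt I) \<in> NC_orbit X Q (act Z' (base_pt I))"
    unfolding NC_orbit_def using e by (auto simp: piC_minus)
  then show ?thesis using Xcls_sim[OF nc_sim[OF C]] by simp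
qed

lemma T_F_eq:
  assumes Q: "quasilattice Q" and I: "I \<in> face_idx X lam"
  shows "T_F X lam Q I = Xcls X lam Q ` Cstar I"
proof (intro set_eqI iffI)
  fix c assume "c \<in> T_F X lam Q I"
  then obtain z p where z: "c = Xcls X lam Q z" "z \<in> CDelta X lam" "p \<in> closure (A_orbit X z)" "p \<in> Cstar I"
    unfolding T_F_def by blast
  have pC: "p \<in> CDelta X lam" using z(4) Cstar_CDelta[OF I] by blast
  have a0: "act (cvec 0) p = p" by simp
  have "p \<in> A_clos X lam z" using z(3) pC by (simp add: A_clos_def)
  then have "p \<in> act (cvec 0) ` A_clos X lam z \<inter> A_clos X lam p" using A_clos_self[OF pC] a0 by force
  moreover have "piR X 0 \<in> Q" using ql_0[OF Q] by (simp add: piR_def)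
  ultimately have "sim X lam Q z p" unfolding sim_def using z(2) pC by blast
  then show "c \<in> Xcls X lam Q ` Cstar I" using z Xcls_sim by blast
next
  fix c assume "c \<in> Xcls X lam Q ` Cstar I"
  then obtain z where z: "c = Xcls X lam Q z" "z \<in> Cstar I" by blast
  then show "c \<in> T_F X lam Q I" unfolding T_F_def
    using Cstar_CDelta[OF I] A_orbit_self closure_subset by blast
qed



lemma NC_self: assumes "quasilattice Q" shows "z \<in> NC_orbit X Q z"
proof -
  have "piC X 0 = 0" by (simp add: vec_eq_iff piC_nth)
  then show ?thesis unfolding NC_orbit_def using cQ_0[OF assms] by (intro CollectI exI[of _ 0]) simp
qed

lemma act_Cstar: "act Z z \<in> Cstar I \<longleftrightarrow> z \<in> Cstar I"
  unfolding Cstar_def by (simp only: mem_Collect_eq act_zero_iff)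

lemma NC_Cstar: "z \<in> Cstar I \<Longrightarrow> NC_orbit X Q z \<subseteq> Cstar I"
  unfolding NC_orbit_def using act_Cstar by blast

lemma NC_char:
  assumes Q: "quasilattice Q" and I: "I \<in> face_idx X lam" and z: "z \<in> Cstar I"
  shows "NC_orbit X Q z = {w \<in> Cstar I. Xcls X lam Q w = Xcls X lam Q z}"
proof (intro set_eqI iffI)
  fix w assume w: "w \<in> NC_orbit X Q z"
  then have wc: "w \<in> Cstar I" using NC_Cstar[OF z] by blast
  then have "Xcls X lam Q z = Xcls X lam Q w" using class_iff[OF Q I z wc] w by blast
  then show "w \<in> {w \<in> Cstar I. Xcls X lam Q w = Xcls X lam Q z}" using wc by simp
next
  fix w assume "w \<in> {w \<in> Cstar I. Xcls X lam Q w = Xcls X lam Q z}"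
  then have wc: "w \<in> Cstar I" and e: "Xcls X lam Q w = Xcls X lam Q z" by auto
  then show "w \<in> NC_orbit X Q z" using class_iff[OF Q I z wc] by simp
qed

lemma NC_eq:
  assumes Q: "quasilattice Q" and I: "I \<in> face_idx X lam" and z: "z \<in> Cstar I" and w: "w \<in> Cstar I"
  shows "NC_orbit X Q z = NC_orbit X Q w \<longleftrightarrow> Xcls X lam Q z = Xcls X lam Q w"
proof
  assume "NC_orbit X Q z = NC_orbit X Q w"
  then have "w \<in> NC_orbit X Q z" using NC_self[OF Q] by simp
  then show "Xcls X lam Q z = Xcls X lam Q w" using class_iff[OF Q I z w] by simp
next
  assume e: "Xcls X lam Q z = Xcls X lam Q w"
  show "NC_orbit X Q z = NC_orbit X Q w" unfolding NC_char[OF Q I z] NC_char[OF Q I w] e ..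
qed

definition rho :: "'d set \<Rightarrow> complex^'d::finite \<Rightarrow> complex^'d" where
  "rho I u = (\<chi> j. if j \<in> I then 0 else u $ j)"

lemma rho_Cstar: "u \<in> UI I \<Longrightarrow> rho I u \<in> Cstar I"
  by (auto simp: rho_def UI_def Cstar_def)

lemma rho_id: "z \<in> Cstar I \<Longrightarrow> rho I z = z"
  by (auto simp: rho_def Cstar_def vec_eq_iff)

lemma Erel_rho: "Erel X Q I u v \<Longrightarrow> Erel X Q I (rho I u) (rho I v)"
  unfolding Erel_def rho_def by auto

lemma open_UI: "open (UI I)"
proof -
  have "UI I = (\<Inter>j\<in>-I. {u::complex^'a. u $ j \<noteq> 0})" by (auto simp: UI_def)
  moreover have "open {u::complex^'a. u $ j \<noteq> 0}" for j
  proof -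
    have "continuous_on UNIV (\<lambda>u::complex^'a. u $ j)" by (rule linear_continuous_on) (rule bounded_linear_vec_nth)
    then show ?thesis by (rule open_Collect_neq[OF _ continuous_on_const])
  qed
  ultimately show ?thesis by auto
qed

lemma cont_rho: "continuous_on UNIV (rho I)"
  unfolding rho_def
proof (rule continuous_on_vec_lambda)
  fix i
  show "continuous_on UNIV (\<lambda>x::complex^'a. if i \<in> I then 0 else x $ i)"
  proof (cases "i \<in> I")
    case True then show ?thesis by (simp add: continuous_on_const)
  next
    case False
    have "continuous_on UNIV (\<lambda>u::complex^'a. u $ i)" by (rule linear_continuous_on) (rule bounded_linear_vec_nth)
    then show ?thesis using False by simp
  qed
qed

definition phiF where
  "phiF X lam Q I Ob = Xcls X lam Q (SOME z. z \<in> Ob \<and> z \<in> Cstar I)"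

lemma phiF_eq:
  assumes Q: "quasilattice Q" and I: "I \<in> face_idx X lam" and z: "z \<in> Cstar I"
  shows "phiF X lam Q I (NC_orbit X Q z) = Xcls X lam Q z"
proof -
  have ex: "\<exists>z'. z' \<in> NC_orbit X Q z \<and> z' \<in> Cstar I" using NC_self[OF Q] z by blast
  define z' where "z' = (SOME z'. z' \<in> NC_orbit X Q z \<and> z' \<in> Cstar I)"
  have z': "z' \<in> NC_orbit X Q z" "z' \<in> Cstar I" using someI_ex[OF ex] unfolding z'_def by auto
  then have "Xcls X lam Q z = Xcls X lam Q z'" using class_iff[OF Q I z z'(2)] by blast
  then show ?thesis unfolding phiF_def z'_def[symmetric] by simp
qed

lemma homeo_part:
  assumes Q: "quasilattice Q" and I: "I \<in> face_idx X lam"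
  shows "homeomorphic_map (orbit_top X Q I) (subtopology (XDelta_top X lam Q) (T_F X lam Q I)) (phiF X lam Q I)"
proof -
  let ?OT = "orbit_top X Q I" and ?XT = "subtopology (XDelta_top X lam Q) (T_F X lam Q I)"
  let ?phi = "phiF X lam Q I"
  have CD: "Cstar I \<subseteq> CDelta X lam" by (rule Cstar_CDelta[OF I])
  have tOT: "topspace ?OT = NC_orbit X Q ` Cstar I"
    by (simp add: orbit_top_def topspace_quot_top)
  have TF: "T_F X lam Q I = Xcls X lam Q ` Cstar I" by (rule T_F_eq[OF Q I])
  have tXT: "topspace ?XT = Xcls X lam Q ` Cstar I"
    using CD by (auto simp: XDelta_top_def topspace_quot_top TF)
  have img: "?phi ` topspace ?OT = topspace ?XT"
    unfolding tOT tXT image_image using phiF_eq[OF Q I] by (simp cong: image_cong)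
  have inj: "inj_on ?phi (topspace ?OT)"
    unfolding tOT
  proof (rule inj_onI, clarify)
    fix z w assume z: "z \<in> Cstar I" and w: "w \<in> Cstar I"
      and e: "?phi (NC_orbit X Q z) = ?phi (NC_orbit X Q w)"
    then show "NC_orbit X Q z = NC_orbit X Q w" using phiF_eq[OF Q I] NC_eq[OF Q I z w] by simp
  qed
  have cont: "continuous_map ?OT ?XT ?phi"
    unfolding continuous_map
  proof (intro conjI allI impI)
    show "?phi ` topspace ?OT \<subseteq> topspace ?XT" using img by simp
  next
    fix U assume "openin ?XT U"
    then obtain V where V: "openin (XDelta_top X lam Q) V" "U = V \<inter> T_F X lam Q I"
      by (auto simp: openin_subtopology)
    then have "openin (top_of_set (CDelta X lam)) {x \<in> CDelta X lam. Xcls X lam Q x \<in> V}"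
      unfolding XDelta_top_def openin_quot_top by simp
    then obtain G where G: "open G" "{x \<in> CDelta X lam. Xcls X lam Q x \<in> V} = CDelta X lam \<inter> G"
      by (auto simp: openin_open)
    have zG: "Xcls X lam Q z \<in> V \<longleftrightarrow> z \<in> G" if "z \<in> Cstar I" for z
      using G(2) CD that by blast
    have "{z \<in> Cstar I. NC_orbit X Q z \<in> {Ob \<in> topspace ?OT. ?phi Ob \<in> U}} = Cstar I \<inter> G"
    proof (intro set_eqI iffI)
      fix z assume "z \<in> {z \<in> Cstar I. NC_orbit X Q z \<in> {Ob \<in> topspace ?OT. ?phi Ob \<in> U}}"
      then have "z \<in> Cstar I" "?phi (NC_orbit X Q z) \<in> V" unfolding V(2) by auto
      then show "z \<in> Cstar I \<inter> G" using zG phiF_eq[OF Q I] by auto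
    next
      fix z assume "z \<in> Cstar I \<inter> G"
      then have z: "z \<in> Cstar I" "Xcls X lam Q z \<in> V" using zG by auto
      then show "z \<in> {z \<in> Cstar I. NC_orbit X Q z \<in> {Ob \<in> topspace ?OT. ?phi Ob \<in> U}}"
        unfolding V(2) tOT TF using phiF_eq[OF Q I z(1)] by auto
    qed
    then have "openin (top_of_set (Cstar I)) {z \<in> Cstar I. NC_orbit X Q z \<in> {Ob \<in> topspace ?OT. ?phi Ob \<in> U}}"
      using G(1) by auto
    then show "openin ?OT {Ob \<in> topspace ?OT. ?phi Ob \<in> U}"
      unfolding orbit_top_def openin_quot_top by (auto simp: tOT[unfolded orbit_top_def])
  qed
  have opn: "open_map ?OT ?XT ?phi"
    unfolding open_map_def
  proof (intro allI impI)
    fix U assume "openin ?OT U"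
    then have U: "U \<subseteq> NC_orbit X Q ` Cstar I"
      and W: "openin (top_of_set (Cstar I)) {z \<in> Cstar I. NC_orbit X Q z \<in> U}"
      unfolding orbit_top_def openin_quot_top by auto
    define W where "W = {z \<in> Cstar I. NC_orbit X Q z \<in> U}"
    obtain G where G: "open G" "W = Cstar I \<inter> G" using W unfolding W_def by (auto simp: openin_open)
    define Om where "Om = UI I \<inter> (rho I -` G)"
    have Om_open: "open Om" unfolding Om_def
  proof -
    have "open (rho I -` G \<inter> UNIV)" using cont_rho[of I] G(1) continuous_on_open_vimage[OF open_UNIV] by blast
    then show "open (UI I \<inter> rho I -` G)" using open_UI[of I] by (intro open_Int) auto
  qed
    have OmC: "Om \<subseteq> CDelta X lam" unfolding Om_def using UI_CDelta[OF I] by blast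
    have Om_iff: "u \<in> Om \<longleftrightarrow> u \<in> UI I \<and> rho I u \<in> W" for u
      unfolding Om_def G(2) using rho_Cstar by auto
    have sat: "x \<in> Om" if u: "u \<in> Om" and x: "x \<in> CDelta X lam" and e: "Xcls X lam Q x = Xcls X lam Q u" for u x
    proof -
      have uU: "u \<in> UI I" "rho I u \<in> W" using u Om_iff by auto
      have "x \<in> Xcls X lam Q u" using e Xcls_self[OF x] by blast
      then have xE: "x \<in> UI I" "Erel X Q I u x" using chain_Erel[OF Q I uU(1)] by auto
      have "rho I x \<in> NC_orbit X Q (rho I u)"
        using Erel_Cstar_NC[OF rho_Cstar[OF uU(1)] rho_Cstar[OF xE(1)] Erel_rho[OF xE(2)]] .
      then have "NC_orbit X Q (rho I x) = NC_orbit X Q (rho I u)"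
        using NC_eq[OF Q I rho_Cstar[OF xE(1)] rho_Cstar[OF uU(1)]] class_iff[OF Q I rho_Cstar[OF uU(1)] rho_Cstar[OF xE(1)]]
        by simp
      then have "rho I x \<in> W" using uU(2) rho_Cstar[OF xE(1)] unfolding W_def by simp
      then show ?thesis using xE(1) Om_iff by blast
    qed
    have phiU: "?phi ` U = Xcls X lam Q ` W"
    proof (intro set_eqI iffI)
      fix c assume "c \<in> ?phi ` U"
      then obtain Ob where Ob: "Ob \<in> U" "c = ?phi Ob" by blast
      then obtain z where z: "z \<in> Cstar I" "Ob = NC_orbit X Q z" using U by blast
      then show "c \<in> Xcls X lam Q ` W" using Ob phiF_eq[OF Q I z(1)] unfolding W_def by auto
    next
      fix c assume "c \<in> Xcls X lam Q ` W"
      then obtain z where z: "z \<in> W" "c = Xcls X lam Q z" by blast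
      then show "c \<in> ?phi ` U" using phiF_eq[OF Q I] unfolding W_def by (auto intro!: image_eqI[of _ _ "NC_orbit X Q z"])
    qed
    have V: "openin (XDelta_top X lam Q) (Xcls X lam Q ` Om)"
      unfolding XDelta_top_def openin_quot_top
    proof
      show "Xcls X lam Q ` Om \<subseteq> Xcls X lam Q ` topspace (top_of_set (CDelta X lam))" using OmC by auto
      have "{x \<in> topspace (top_of_set (CDelta X lam)). Xcls X lam Q x \<in> Xcls X lam Q ` Om} = Om"
        using sat OmC by auto
      then show "openin (top_of_set (CDelta X lam)) {x \<in> topspace (top_of_set (CDelta X lam)). Xcls X lam Q x \<in> Xcls X lam Q ` Om}"
        using open_subset[OF OmC Om_open] by simp
    qed
    have "Xcls X lam Q ` W = Xcls X lam Q ` Om \<inter> T_F X lam Q I"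
    proof (intro set_eqI iffI)
      fix c assume "c \<in> Xcls X lam Q ` W"
      then obtain z where z: "z \<in> W" "c = Xcls X lam Q z" by blast
      have "z \<in> Cstar I" using z unfolding W_def by blast
      then have "z \<in> UI I" "rho I z = z" using Cstar_UI[of I] rho_id[of z I] by auto
      then have "z \<in> Om" using z Om_iff by auto
      then show "c \<in> Xcls X lam Q ` Om \<inter> T_F X lam Q I" using z \<open>z \<in> Cstar I\<close> TF by auto
    next
      fix c assume "c \<in> Xcls X lam Q ` Om \<inter> T_F X lam Q I"
      then obtain u z where uz: "u \<in> Om" "z \<in> Cstar I" "c = Xcls X lam Q u" "c = Xcls X lam Q z"
        using TF by auto
      then have "z \<in> Om" using sat CD by blast
      then have "z \<in> W" using Om_iff rho_id[OF uz(2)] by auto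
      then show "c \<in> Xcls X lam Q ` W" using uz by auto
    qed
    then show "openin ?XT (?phi ` U)" unfolding phiU openin_subtopology using V by blast
  qed
  show ?thesis by (rule bijective_open_imp_homeomorphic_map[OF cont opn img inj])
qed



lemma regular_empty:
  fixes X :: "'d::finite \<Rightarrow> real^'n"
  assumes fac: "\<forall>j. {\<mu> \<in> Delta X lam. \<mu> \<bullet> X j = lam j} facet_of Delta X lam"
  shows "regular_face X lam {}"
proof -
  have "\<exists>m. m \<in> Delta X lam \<and> m \<bullet> X j > lam j" for j
  proof -
    have "{\<mu> \<in> Delta X lam. \<mu> \<bullet> X j = lam j} \<noteq> Delta X lam"
      using fac facet_of_irrefl by metis
    then obtain m where m: "m \<in> Delta X lam" "m \<bullet> X j \<noteq> lam j" by blast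
    then have "m \<bullet> X j \<ge> lam j" by (simp add: Delta_def)
    then show ?thesis using m by auto
  qed
  then obtain m where m: "\<And>j. m j \<in> Delta X lam" "\<And>j. m j \<bullet> X j > lam j" by metis
  define d where "d = real CARD('d)"
  have dpos: "d > 0" by (simp add: d_def)
  define mu where "mu = (1 / d) *\<^sub>R (\<Sum>j\<in>UNIV. m j)"
  have strict: "mu \<bullet> X k > lam k" for k
  proof -
    have ge: "m j \<bullet> X k \<ge> lam k" for j using m(1)[of j] by (simp add: Delta_def)
    have "(\<Sum>j\<in>UNIV. m j \<bullet> X k) = m k \<bullet> X k + (\<Sum>j\<in>UNIV - {k}. m j \<bullet> X k)"
      by (subst sum.remove[of UNIV k]) auto
    also have "\<dots> > lam k + (\<Sum>j\<in>UNIV - {k}. lam k)"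
      using m(2)[of k] sum_mono[of "UNIV - {k}" "\<lambda>j. lam k" "\<lambda>j. m j \<bullet> X k"] ge by auto
    also have "lam k + (\<Sum>j\<in>UNIV - {k}. lam k) = (\<Sum>j::'d\<in>UNIV. lam k)"
      using sum.remove[of UNIV k "\<lambda>j. lam k"] by simp
    also have "\<dots> = d * lam k" by (simp add: d_def)
    finally have "(\<Sum>j\<in>UNIV. m j \<bullet> X k) > d * lam k" .
    then have "(1 / d) * (\<Sum>j\<in>UNIV. m j \<bullet> X k) > lam k"
      using dpos by (simp add: field_simps)
    then show ?thesis by (simp add: mu_def inner_sum_left)
  qed
  have OF: "open_face X lam {} = {x. \<forall>k. lam k < x \<bullet> X k}"
    unfolding open_face_def Delta_def tight_def
  proof (intro set_eqI iffI)
    fix x assume "x \<in> {\<mu> \<in> {\<mu>. \<forall>j. lam j \<le> \<mu> \<bullet> X j}. {j. \<mu> \<bullet> X j = lam j} = {}}"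
    then have h1: "\<forall>j. lam j \<le> x \<bullet> X j" and h2: "\<forall>j. x \<bullet> X j \<noteq> lam j" by auto
    show "x \<in> {x. \<forall>k. lam k < x \<bullet> X k}" proof -
      have "lam k < x \<bullet> X k" for k using h1 h2 by (metis order_le_neq_trans)
      then show ?thesis by simp
    qed
  next
    fix x assume "x \<in> {x. \<forall>k. lam k < x \<bullet> X k}"
    then have h: "\<forall>k. lam k < x \<bullet> X k" by simp
    then have "\<forall>j. lam j \<le> x \<bullet> X j" by (simp add: less_imp_le)
    moreover have "{j. x \<bullet> X j = lam j} = {}" using h by (metis (mono_tags) empty_Collect_eq less_irrefl)
    ultimately show "x \<in> {\<mu> \<in> {\<mu>. \<forall>j. lam j \<le> \<mu> \<bullet> X j}. {j. \<mu> \<bullet> X j = lam j} = {}}"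
      by simp
  qed
  have muOF: "mu \<in> open_face X lam {}" unfolding OF using strict by simp
  have "{x. \<forall>k. lam k < x \<bullet> X k} = (\<Inter>k. {x. inner (X k) x > lam k})"
    by (auto simp: inner_commute)
  then have "open (open_face X lam {})" unfolding OF by (auto intro: open_halfspace_gt)
  then have "aff_dim (open_face X lam {}) = int DIM(real^'n)"
    using muOF aff_dim_open by blast
  moreover have "{} \<in> face_idx X lam" using muOF unfolding open_face_def face_idx_def by blast
  ultimately show ?thesis unfolding regular_face_def by simp
qed

lemma face_of_singular: "singular_face X lam I \<Longrightarrow> I \<in> face_idx X lam"
  by (simp add: singular_face_def)
lemma face_of_regular: "regular_face X lam I \<Longrightarrow> I \<in> face_idx X lam"
  by (simp add: regular_face_def)

lemma img_rep: "Xcls X lam Q ` Cstar I = {Xcls X lam Q (act Z (base_pt I)) | Z. True}"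
  unfolding Cstar_rep by blast

theorem mainTheorem6:
  fixes X :: "'d::finite \<Rightarrow> real^'n" and lam :: "'d \<Rightarrow> real" and Q :: "(real^'n) set"
  assumes "polytope (Delta X lam)"
    and "aff_dim (Delta X lam) = int CARD('n)"
    and "\<forall>j. {\<mu> \<in> Delta X lam. \<mu> \<bullet> X j = lam j} facet_of Delta X lam"
    and "inj (\<lambda>j. {\<mu> \<in> Delta X lam. \<mu> \<bullet> X j = lam j})"
    and "quasilattice Q" and "\<forall>j. X j \<in> Q"
  shows
    "(\<forall>I. singular_face X lam I \<longrightarrow>
        (\<exists>\<phi>. homeomorphic_map (orbit_top X Q I)
                 (subtopology (XDelta_top X lam Q) (T_F X lam Q I)) \<phi> \<and>
              (\<forall>z\<in>Cstar I. \<phi> (NC_orbit X Q z) = Xcls X lam Q z))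
      \<and> T_F X lam Q I = {Xcls X lam Q (act Z (base_pt I)) | Z. True}
      \<and> (\<forall>Z Z'. piC X Z - piC X Z' \<in> cvec ` Q \<longrightarrow>
            Xcls X lam Q (act Z (base_pt I)) = Xcls X lam Q (act Z' (base_pt I))))
     \<and> T_max X lam Q = (\<Union>I\<in>{I. regular_face X lam I}. Xcls X lam Q ` Cstar I)
     \<and> (\<forall>I. regular_face X lam I \<longrightarrow>
          Xcls X lam Q ` Cstar I = {Xcls X lam Q (act Z (base_pt I)) | Z. True}
        \<and> (\<forall>Z Z'. piC X Z - piC X Z' \<in> cvec ` Q \<longrightarrow>
            Xcls X lam Q (act Z (base_pt I)) = Xcls X lam Q (act Z' (base_pt I)))
        \<and> (\<forall>z\<in>Cstar I. \<forall>w\<in>Cstar I. Xcls X lam Q z = Xcls X lam Q w \<longleftrightarrow> w \<in> NC_orbit X Q z))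
     \<and> regular_face X lam {}
     \<and> Xcls X lam Q ` Cstar {} \<subseteq> T_max X lam Q"
proof -
  note Q = assms(5)
  have reg0: "regular_face X lam {}" by (rule regular_empty[OF assms(3)])
  have P1: "\<forall>I. singular_face X lam I \<longrightarrow>
        (\<exists>\<phi>. homeomorphic_map (orbit_top X Q I)
                 (subtopology (XDelta_top X lam Q) (T_F X lam Q I)) \<phi> \<and>
              (\<forall>z\<in>Cstar I. \<phi> (NC_orbit X Q z) = Xcls X lam Q z))
      \<and> T_F X lam Q I = {Xcls X lam Q (act Z (base_pt I)) | Z. True}
      \<and> (\<forall>Z Z'. piC X Z - piC X Z' \<in> cvec ` Q \<longrightarrow>
            Xcls X lam Q (act Z (base_pt I)) = Xcls X lam Q (act Z' (base_pt I)))"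
  proof (rule allI, rule impI, intro conjI)
    fix I assume "singular_face X lam I"
    then have I: "I \<in> face_idx X lam" by (rule face_of_singular)
    show "\<exists>\<phi>. homeomorphic_map (orbit_top X Q I)
                 (subtopology (XDelta_top X lam Q) (T_F X lam Q I)) \<phi> \<and>
              (\<forall>z\<in>Cstar I. \<phi> (NC_orbit X Q z) = Xcls X lam Q z)"
      using homeo_part[OF Q I] phiF_eq[OF Q I] by blast
    show "T_F X lam Q I = {Xcls X lam Q (act Z (base_pt I)) | Z. True}"
      using T_F_eq[OF Q I] img_rep by simp
    show "\<forall>Z Z'. piC X Z - piC X Z' \<in> cvec ` Q \<longrightarrow>
            Xcls X lam Q (act Z (base_pt I)) = Xcls X lam Q (act Z' (base_pt I))"
      using Xcls_act_eq[OF I] by blast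
  qed
  have P2: "T_max X lam Q = (\<Union>I\<in>{I. regular_face X lam I}. Xcls X lam Q ` Cstar I)"
    unfolding T_max_def by (rule image_UN)
  have P3: "\<forall>I. regular_face X lam I \<longrightarrow>
          Xcls X lam Q ` Cstar I = {Xcls X lam Q (act Z (base_pt I)) | Z. True}
        \<and> (\<forall>Z Z'. piC X Z - piC X Z' \<in> cvec ` Q \<longrightarrow>
            Xcls X lam Q (act Z (base_pt I)) = Xcls X lam Q (act Z' (base_pt I)))
        \<and> (\<forall>z\<in>Cstar I. \<forall>w\<in>Cstar I. Xcls X lam Q z = Xcls X lam Q w \<longleftrightarrow> w \<in> NC_orbit X Q z)"
  proof (rule allI, rule impI, intro conjI)
    fix I assume "regular_face X lam I"
    then have I: "I \<in> face_idx X lam" by (rule face_of_regular)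
    show "Xcls X lam Q ` Cstar I = {Xcls X lam Q (act Z (base_pt I)) | Z. True}" by (rule img_rep)
    show "\<forall>Z Z'. piC X Z - piC X Z' \<in> cvec ` Q \<longrightarrow>
            Xcls X lam Q (act Z (base_pt I)) = Xcls X lam Q (act Z' (base_pt I))"
      using Xcls_act_eq[OF I] by blast
    show "\<forall>z\<in>Cstar I. \<forall>w\<in>Cstar I. Xcls X lam Q z = Xcls X lam Q w \<longleftrightarrow> w \<in> NC_orbit X Q z"
      using class_iff[OF Q I] by blast
  qed
  have P5: "Xcls X lam Q ` Cstar {} \<subseteq> T_max X lam Q"
    unfolding T_max_def using reg0 by blast
  show ?thesis using P1 P2 P3 reg0 P5 by blast
qed

end
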